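(* Let $G=(V,E)$ be a strongly biconnected directed graph, and let $G^{eb}$ be the undirected simple graph with vertex set $V$ in which distinct vertices $x,y$ are adjacent if and only if $x \overset{e}{\leftrightsquigarrow} y$. Then the $2$-edge-biconnected blocks of $G$ are exactly the vertex sets of the blocks (maximal biconnected subgraphs, where a single edge counts as a block) of $G^{eb}$ that have at least $2$ vertices. In particular, if $G$ has no b-bridges and $|V|\ge 2$, then $V$ is the unique $2$-edge-biconnected block of $G$.
   Context: All graphs are finite. A directed graph $H$ is strongly biconnected if $H$ is strongly connected and its underlying undirected graph is biconnected. A strongly biconnected component of a directed graph $H=(W,F)$ is a maximal vertex subset $C\subseteq W$ such that the induced subgraph $H[C]$ is strongly biconnected. For a strongly biconnected directed graph $G=(V,E)$ and an edge $b\in E$, $G\setminus\{b\}=(V,E\setminus\{b\})$. An edge $b$ of $G$ is a b-bridge if $G\setminus\{b\}$ is not strongly biconnected. For distinct $x,y\in V$, write $x \overset{e}{\leftrightsquigarrow} y$ if for every edge $b\in E$ there is a strongly biconnected component of $G\setminus\{b\}$ containing both $x$ and $y$. A $2$-edge-biconnected block of $G$ is a maximal vertex subset $U\subseteq V$ with $|U|>1$ such that $x \overset{e}{\leftrightsquigarrow} y$ for all distinct $x,y\in U$. *)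

theory Defs
  imports Main
begin

text \<open>All connectivity notions are taken inside the induced subgraph on the given vertex set.\<close>

definition uconnected :: "'a set \<Rightarrow> ('a \<times> 'a) set \<Rightarrow> bool" where
  "uconnected W R \<longleftrightarrow>
     (\<forall>x\<in>W. \<forall>y\<in>W. (x, y) \<in> ((R \<union> R\<inverse>) \<inter> (W \<times> W))\<^sup>*)"

text \<open>Biconnected: connected and without articulation points (a single edge, i.e. two
  adjacent vertices, counts as biconnected).\<close>
definition ubiconnected :: "'a set \<Rightarrow> ('a \<times> 'a) set \<Rightarrow> bool" where
  "ubiconnected W R \<longleftrightarrow> uconnected W R \<and> (\<forall>v\<in>W. uconnected (W - {v}) R)"

definition ublock :: "'a set \<Rightarrow> ('a \<times> 'a) set \<Rightarrow> 'a set \<Rightarrow> bool" where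
  "ublock W R U \<longleftrightarrow> U \<subseteq> W \<and> ubiconnected U R \<and>
     (\<forall>U'. U \<subset> U' \<and> U' \<subseteq> W \<longrightarrow> \<not> ubiconnected U' R)"

definition strongly_connected :: "'a set \<Rightarrow> ('a \<times> 'a) set \<Rightarrow> bool" where
  "strongly_connected W F \<longleftrightarrow> (\<forall>x\<in>W. \<forall>y\<in>W. (x, y) \<in> (F \<inter> (W \<times> W))\<^sup>*)"

definition strongly_biconnected :: "'a set \<Rightarrow> ('a \<times> 'a) set \<Rightarrow> bool" where
  "strongly_biconnected W F \<longleftrightarrow> strongly_connected W F \<and> ubiconnected W F"

definition sb_component :: "'a set \<Rightarrow> ('a \<times> 'a) set \<Rightarrow> 'a set \<Rightarrow> bool" where
  "sb_component W F C \<longleftrightarrow> C \<subseteq> W \<and> strongly_biconnected C (F \<inter> (C \<times> C)) \<and>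
     (\<forall>D. C \<subset> D \<and> D \<subseteq> W \<longrightarrow> \<not> strongly_biconnected D (F \<inter> (D \<times> D)))"

definition b_bridge :: "'a set \<Rightarrow> ('a \<times> 'a) set \<Rightarrow> 'a \<times> 'a \<Rightarrow> bool" where
  "b_bridge V E b \<longleftrightarrow> b \<in> E \<and> \<not> strongly_biconnected V (E - {b})"

definition eb_rel :: "'a set \<Rightarrow> ('a \<times> 'a) set \<Rightarrow> 'a \<Rightarrow> 'a \<Rightarrow> bool" where
  "eb_rel V E x y \<longleftrightarrow> x \<in> V \<and> y \<in> V \<and> x \<noteq> y \<and>
     (\<forall>b\<in>E. \<exists>C. sb_component V (E - {b}) C \<and> x \<in> C \<and> y \<in> C)"

definition two_eb_block :: "'a set \<Rightarrow> ('a \<times> 'a) set \<Rightarrow> 'a set \<Rightarrow> bool" where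
  "two_eb_block V E U \<longleftrightarrow> U \<subseteq> V \<and> card U > 1 \<and>
     (\<forall>x\<in>U. \<forall>y\<in>U. x \<noteq> y \<longrightarrow> eb_rel V E x y) \<and>
     (\<forall>U'. U \<subset> U' \<and> U' \<subseteq> V \<longrightarrow> \<not> (\<forall>x\<in>U'. \<forall>y\<in>U'. x \<noteq> y \<longrightarrow> eb_rel V E x y))"

definition Geb :: "'a set \<Rightarrow> ('a \<times> 'a) set \<Rightarrow> ('a \<times> 'a) set" where
  "Geb V E = {(x, y). eb_rel V E x y}"

end

theory Submission
  imports Defs
begin

lemma sb_restrict: "strongly_biconnected C (F \<inter> C \<times> C) = strongly_biconnected C F"
proof -
  have a: "(F \<inter> C \<times> C) \<inter> (C \<times> C) = F \<inter> C \<times> C" by auto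
  have b: "\<And>W. W \<subseteq> C \<Longrightarrow> ((F \<inter> C \<times> C) \<union> (F \<inter> C \<times> C)\<inverse>) \<inter> (W \<times> W) = (F \<union> F\<inverse>) \<inter> (W \<times> W)"
    by auto
  have c: "C - {v} \<subseteq> C" for v by auto
  show ?thesis
    unfolding strongly_biconnected_def strongly_connected_def ubiconnected_def uconnected_def
    using a b[OF order_refl] b[OF c] by simp
qed

lemma sb_comp_iff: "sb_component V F C \<longleftrightarrow> C \<subseteq> V \<and> strongly_biconnected C F \<and>
   (\<forall>D. C \<subset> D \<and> D \<subseteq> V \<longrightarrow> \<not> strongly_biconnected D F)"
  unfolding sb_component_def sb_restrict by simp

lemma uconn_mono: "uconnected W R \<Longrightarrow> R \<subseteq> R' \<Longrightarrow> uconnected W R'"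
  unfolding uconnected_def
proof (intro ballI)
  fix x y assume h: "\<forall>x\<in>W. \<forall>y\<in>W. (x, y) \<in> ((R \<union> R\<inverse>) \<inter> W \<times> W)\<^sup>*" "R \<subseteq> R'" "x \<in> W" "y \<in> W"
  have "((R \<union> R\<inverse>) \<inter> W \<times> W) \<subseteq> ((R' \<union> R'\<inverse>) \<inter> W \<times> W)" using h(2) by auto
  then show "(x, y) \<in> ((R' \<union> R'\<inverse>) \<inter> W \<times> W)\<^sup>*" using h rtrancl_mono by blast
qed

lemma ubic_mono: "ubiconnected W R \<Longrightarrow> R \<subseteq> R' \<Longrightarrow> ubiconnected W R'"
  unfolding ubiconnected_def using uconn_mono by blast

lemma extend_to_comp:
  assumes "finite V" "D \<subseteq> V" "strongly_biconnected D F"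
  shows "\<exists>C. sb_component V F C \<and> D \<subseteq> C"
proof -
  define S where "S = {D'. D \<subseteq> D' \<and> D' \<subseteq> V \<and> strongly_biconnected D' F}"
  have "finite S" unfolding S_def using assms(1)
    by (rule finite_subset[rotated, OF finite_Pow_iff[THEN iffD2]]) auto
  moreover have "D \<in> S" using assms unfolding S_def by auto
  ultimately obtain m where m: "m \<in> S" "\<forall>b\<in>S. m \<le> b \<longrightarrow> m = b"
    using finite_has_maximal2 by blast
  have "sb_component V F m"
    unfolding sb_comp_iff
  proof (intro conjI allI impI)
    show "m \<subseteq> V" "strongly_biconnected m F" using m(1) unfolding S_def by auto
  next
    fix D'' assume h: "m \<subset> D'' \<and> D'' \<subseteq> V"
    show "\<not> strongly_biconnected D'' F"
    proof
      assume "strongly_biconnected D'' F"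
      then have "D'' \<in> S" using h m(1) unfolding S_def by auto
      then show False using m(2) h by auto
    qed
  qed
  then show ?thesis using m(1) unfolding S_def by auto
qed

lemma KL:
  assumes fin: "finite V" and ub: "ubiconnected U R"
    and Rsub: "R \<subseteq> {(a,b). a \<noteq> b \<and> (\<exists>C. sb_component V F C \<and> a \<in> C \<and> b \<in> C)}"
    and xU: "x \<in> U" and yU: "y \<in> U" and xy: "x \<noteq> y" and UV: "U \<subseteq> V"
  shows "\<exists>C. sb_component V F C \<and> U \<subseteq> C"
proof -
  define P where "P = {C. sb_component V F C \<and> (\<exists>a b. a\<in>U \<and> b\<in>U \<and> a\<noteq>b \<and> a\<in>C \<and> b\<in>C)}"
  define X where "X = \<Union>P"
  have Rc: "q \<noteq> q' \<and> (\<exists>C. sb_component V F C \<and> q \<in> C \<and> q' \<in> C)"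
    if "(q,q') \<in> R \<union> R\<inverse>" for q q'
  proof (cases "(q,q') \<in> R")
    case True then show ?thesis using Rsub by auto
  next
    case False then have "(q',q) \<in> R" using that by auto
    then show ?thesis using Rsub by auto
  qed
  have edgeP: "\<exists>C\<in>P. q\<in>C \<and> q'\<in>C"
    if e: "(q,q') \<in> R \<union> R\<inverse>" "q\<in>U" "q'\<in>U" for q q'
  proof -
    obtain C where C: "sb_component V F C" "q \<in> C" "q' \<in> C" and ne: "q \<noteq> q'" using Rc[OF e(1)] by blast
    have "C \<in> P" unfolding P_def mem_Collect_eq using C ne e(2,3) by blast
    then show ?thesis using C by blast
  qed
  have PSB: "strongly_biconnected C F" and PV: "C \<subseteq> V" if "C \<in> P" for C
    using that unfolding P_def mem_Collect_eq sb_comp_iff by auto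
  have XV: "X \<subseteq> V" unfolding X_def using PV by auto
  have PX: "C \<in> P \<Longrightarrow> C \<subseteq> X" for C unfolding X_def by auto
  have PU: "\<exists>a\<in>U. a \<in> C \<and> a \<noteq> v" if CP: "C \<in> P" for C v
  proof -
    obtain a b where "a\<in>U" "b\<in>U" "a\<noteq>b" "a\<in>C" "b\<in>C" using CP unfolding P_def mem_Collect_eq by auto
    then show ?thesis by (cases "a = v") auto
  qed
  have Uc: "uconnected U R" using ub unfolding ubiconnected_def by blast
  have UX: "U \<subseteq> X"
  proof
    fix a assume a: "a \<in> U"
    obtain c where c: "c \<in> U" "c \<noteq> a" using xU yU xy by blast
    have "(a,c) \<in> ((R \<union> R\<inverse>) \<inter> U \<times> U)\<^sup>*" using Uc a c unfolding uconnected_def by blast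
    then obtain a' where "(a,a') \<in> (R \<union> R\<inverse>) \<inter> U \<times> U"
      using c(2) by (metis converse_rtranclE)
    then obtain C where "C \<in> P" "a \<in> C" using edgeP by blast
    then show "a \<in> X" using PX by blast
  qed
  let ?T = "(F \<inter> X \<times> X)\<^sup>*"
  have Cconn: "(a,b) \<in> ?T" if "C \<in> P" "a \<in> C" "b \<in> C" for C a b
  proof -
    have "(a,b) \<in> (F \<inter> C \<times> C)\<^sup>*" using PSB[OF that(1)] that
      unfolding strongly_biconnected_def strongly_connected_def by blast
    moreover have "F \<inter> C \<times> C \<subseteq> F \<inter> X \<times> X" using PX[OF that(1)] by blast
    ultimately show ?thesis using rtrancl_mono by blast
  qed
  have Ux: "(a,x) \<in> ?T \<and> (x,a) \<in> ?T" if "a \<in> U" for a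
  proof -
    have "(a,x) \<in> ((R \<union> R\<inverse>) \<inter> U \<times> U)\<^sup>*" using Uc that xU unfolding uconnected_def by blast
    then show ?thesis
    proof (induction rule: converse_rtrancl_induct)
      case base then show ?case by simp
    next
      case (step q q')
      then obtain C where "C \<in> P" "q \<in> C" "q' \<in> C" using edgeP by blast
      then have "(q,q') \<in> ?T" "(q',q) \<in> ?T" using Cconn by blast+
      then show ?case using step.IH by (meson rtrancl_trans)
    qed
  qed
  have SC: "strongly_connected X F" unfolding strongly_connected_def
  proof (intro ballI)
    fix w w' assume w: "w \<in> X" "w' \<in> X"
    obtain C where C: "C \<in> P" "w \<in> C" using w(1) unfolding X_def by blast
    obtain C' where C': "C' \<in> P" "w' \<in> C'" using w(2) unfolding X_def by blast
    obtain a where a: "a \<in> U" "a \<in> C" using PU[OF C(1)] by blast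
    obtain a' where a': "a' \<in> U" "a' \<in> C'" using PU[OF C'(1)] by blast
    have "(w,a) \<in> ?T" using Cconn C a by blast
    moreover have "(a',w') \<in> ?T" using Cconn C' a' by blast
    ultimately show "(w,w') \<in> ?T" using Ux[OF a(1)] Ux[OF a'(1)] by (meson rtrancl_trans)
  qed
  have UCX: "uconnected X F" unfolding uconnected_def
  proof (intro ballI)
    fix w w' assume "w \<in> X" "w' \<in> X"
    then have "(w,w') \<in> ?T" using SC unfolding strongly_connected_def by blast
    moreover have "F \<inter> X \<times> X \<subseteq> (F \<union> F\<inverse>) \<inter> X \<times> X" by blast
    ultimately show "(w,w') \<in> ((F \<union> F\<inverse>) \<inter> X \<times> X)\<^sup>*" using rtrancl_mono by blast
  qed
  have UCV: "uconnected (X - {v}) F" if vX: "v \<in> X" for v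
  proof -
    define Q where "Q = (F \<union> F\<inverse>) \<inter> (X - {v}) \<times> (X - {v})"
    have Qs: "Q\<inverse> = Q" unfolding Q_def by blast
    have sym: "(b,a) \<in> Q\<^sup>*" if "(a,b) \<in> Q\<^sup>*" for a b
      using rtrancl_converseI[OF that] Qs by simp
    have Ccon2: "(a,b) \<in> Q\<^sup>*" if "C \<in> P" "a \<in> C - {v}" "b \<in> C - {v}" for C a b
    proof -
      have "uconnected (C - {v}) F"
      proof (cases "v \<in> C")
        case True then show ?thesis using PSB[OF that(1)] unfolding strongly_biconnected_def ubiconnected_def by blast
      next
        case False then have "C - {v} = C" by blast
        then show ?thesis using PSB[OF that(1)] unfolding strongly_biconnected_def ubiconnected_def by simp
      qed
      then have "(a,b) \<in> ((F \<union> F\<inverse>) \<inter> (C - {v}) \<times> (C - {v}))\<^sup>*" using that unfolding uconnected_def by blast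
      moreover have "(F \<union> F\<inverse>) \<inter> (C - {v}) \<times> (C - {v}) \<subseteq> Q" using PX[OF that(1)] unfolding Q_def by blast
      ultimately show ?thesis using rtrancl_mono by blast
    qed
    obtain t where t: "t \<in> U" "t \<noteq> v" using xU yU xy by blast
    have UcV: "uconnected (U - {v}) R"
    proof (cases "v \<in> U")
      case True then show ?thesis using ub unfolding ubiconnected_def by blast
    next
      case False then have "U - {v} = U" by blast
      then show ?thesis using Uc by simp
    qed
    have Ut: "(a,t) \<in> Q\<^sup>*" if "a \<in> U - {v}" for a
    proof -
      have "(a,t) \<in> ((R \<union> R\<inverse>) \<inter> (U - {v}) \<times> (U - {v}))\<^sup>*" using UcV that t unfolding uconnected_def by blast
      then show ?thesis
      proof (induction rule: converse_rtrancl_induct)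
        case base then show ?case by simp
      next
        case (step q q')
        then obtain C where "C \<in> P" "q \<in> C" "q' \<in> C" using edgeP by blast
        then have "(q,q') \<in> Q\<^sup>*" using Ccon2 step.hyps by blast
        then show ?case using step.IH by (meson rtrancl_trans)
      qed
    qed
    have Wt: "(w,t) \<in> Q\<^sup>*" if wX: "w \<in> X - {v}" for w
    proof -
      obtain C where C: "C \<in> P" "w \<in> C" using wX unfolding X_def by blast
      obtain a where a: "a \<in> U" "a \<in> C" "a \<noteq> v" using PU[OF C(1)] by blast
      have "(w,a) \<in> Q\<^sup>*" using Ccon2 C a wX by blast
      then show ?thesis using Ut a by (meson rtrancl_trans Diff_iff singletonD)
    qed
    show ?thesis unfolding uconnected_def Q_def[symmetric]
      using Wt sym by (meson rtrancl_trans)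
  qed
  have "strongly_biconnected X F"
    unfolding strongly_biconnected_def ubiconnected_def using SC UCX UCV by blast
  then obtain C where "sb_component V F C" "X \<subseteq> C" using extend_to_comp[OF fin XV] by blast
  then show ?thesis using UX by blast
qed

lemma clique_uconn:
  assumes "\<forall>x\<in>U. \<forall>y\<in>U. x \<noteq> y \<longrightarrow> eb_rel V E x y" "W \<subseteq> U"
  shows "uconnected W (Geb V E)"
  unfolding uconnected_def
proof (intro ballI)
  fix a b assume ab: "a \<in> W" "b \<in> W"
  show "(a, b) \<in> ((Geb V E \<union> (Geb V E)\<inverse>) \<inter> W \<times> W)\<^sup>*"
  proof (cases "a = b")
    case True then show ?thesis by simp
  next
    case False
    then have "(a,b) \<in> (Geb V E \<union> (Geb V E)\<inverse>) \<inter> W \<times> W"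
      using assms ab unfolding Geb_def by auto
    then show ?thesis by (rule r_into_rtrancl)
  qed
qed

lemma ub_iff_clique:
  assumes fin: "finite V" and UV: "U \<subseteq> V"
  shows "ubiconnected U (Geb V E) \<longleftrightarrow> (\<forall>x\<in>U. \<forall>y\<in>U. x \<noteq> y \<longrightarrow> eb_rel V E x y)"
proof
  assume cl: "\<forall>x\<in>U. \<forall>y\<in>U. x \<noteq> y \<longrightarrow> eb_rel V E x y"
  show "ubiconnected U (Geb V E)" unfolding ubiconnected_def
    using clique_uconn[OF cl] by blast
next
  assume ub: "ubiconnected U (Geb V E)"
  show "\<forall>x\<in>U. \<forall>y\<in>U. x \<noteq> y \<longrightarrow> eb_rel V E x y"
  proof (intro ballI impI)
    fix x y assume xy: "x \<in> U" "y \<in> U" "x \<noteq> y"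
    have "\<exists>C. sb_component V (E - {b}) C \<and> x \<in> C \<and> y \<in> C" if bE: "b \<in> E" for b
    proof -
      have "Geb V E \<subseteq> {(a,c). a \<noteq> c \<and> (\<exists>C. sb_component V (E - {b}) C \<and> a \<in> C \<and> c \<in> C)}"
        using bE unfolding Geb_def eb_rel_def by auto
      from KL[OF fin ub this xy UV] show ?thesis using xy by blast
    qed
    then show "eb_rel V E x y" unfolding eb_rel_def using xy UV by blast
  qed
qed

theorem mainTheorem4:
  fixes V :: "'a set" and E :: "('a \<times> 'a) set"
  assumes "finite V" and "E \<subseteq> V \<times> V" and "strongly_biconnected V E"
  shows "{U. two_eb_block V E U} = {U. ublock V (Geb V E) U \<and> card U \<ge> 2} \<and>
         ((\<not> (\<exists>b. b_bridge V E b)) \<and> card V \<ge> 2 \<longrightarrow> {U. two_eb_block V E U} = {V})"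
proof
  have eq: "two_eb_block V E U \<longleftrightarrow> ublock V (Geb V E) U \<and> card U \<ge> 2" for U
  proof
    assume h: "two_eb_block V E U"
    then have UV: "U \<subseteq> V" unfolding two_eb_block_def by blast
    show "ublock V (Geb V E) U \<and> card U \<ge> 2"
      using h ub_iff_clique[OF assms(1) UV] ub_iff_clique[OF assms(1)]
      unfolding two_eb_block_def ublock_def by auto
  next
    assume h: "ublock V (Geb V E) U \<and> card U \<ge> 2"
    then have UV: "U \<subseteq> V" unfolding ublock_def by blast
    show "two_eb_block V E U"
      using h ub_iff_clique[OF assms(1) UV] ub_iff_clique[OF assms(1)]
      unfolding two_eb_block_def ublock_def by auto
  qed
  then show "{U. two_eb_block V E U} = {U. ublock V (Geb V E) U \<and> card U \<ge> 2}" by blast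
next
  show "(\<not> (\<exists>b. b_bridge V E b)) \<and> card V \<ge> 2 \<longrightarrow> {U. two_eb_block V E U} = {V}"
  proof
    assume h: "(\<not> (\<exists>b. b_bridge V E b)) \<and> card V \<ge> 2"
    have cl: "\<forall>x\<in>V. \<forall>y\<in>V. x \<noteq> y \<longrightarrow> eb_rel V E x y"
    proof (intro ballI impI)
      fix x y assume xy: "x \<in> V" "y \<in> V" "x \<noteq> y"
      have "sb_component V (E - {b}) V" if "b \<in> E" for b
      proof -
        have "strongly_biconnected V (E - {b})" using h that unfolding b_bridge_def by blast
        then show ?thesis unfolding sb_comp_iff by blast
      qed
      then show "eb_rel V E x y" unfolding eb_rel_def using xy by blast
    qed
    have "two_eb_block V E U \<longleftrightarrow> U = V" for U
    proof
      assume "two_eb_block V E U"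
      then show "U = V" using cl unfolding two_eb_block_def by blast
    next
      assume "U = V"
      then show "two_eb_block V E U" using cl h unfolding two_eb_block_def by auto
    qed
    then show "{U. two_eb_block V E U} = {V}" by blast
  qed
qed

end
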